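(* Let $\mathscr D:\mathscr N=\mathscr N_1\cup\cdots\cup\mathscr N_k$ be a pairwise binary-sized decomposition of a chemical reaction network $\mathscr N$ such that at least one linkage class of $\mathscr N$ does not contain a common complex. Let $\mathscr N'$ and $\mathscr N'_i$ be the networks obtained by removing from $\mathscr N$ and $\mathscr N_i$, respectively, their $\mathscr C_{\mathscr D}$-linkage classes. Then $\mathscr D':\mathscr N'=\mathscr N'_1\cup\cdots\cup\mathscr N'_k$ is a $\mathscr C$-decomposition if $\mathscr D'$ is non-trivial.
   Context: A CRN $\mathscr N=(\mathscr S,\mathscr C,\mathscr R)$ is viewed as a directed graph on its complexes with arcs its reactions; linkage classes are the connected components of the underlying undirected graph. A decomposition $\mathscr N=\mathscr N_1\cup\cdots\cup\mathscr N_k$ is given by a partition $\{\mathscr R_1,\dots,\mathscr R_k\}$ of the reaction set; the subnetwork $\mathscr N_i$ has reactions $\mathscr R_i$ and complex set $\mathscr C_i$ the complexes occurring in reactions of $\mathscr R_i$. The length of a decomposition is the number of (nonempty) subnetworks; it is empty if the length is 0, trivial if the length is 1, and non-trivial otherwise. The set $\mathscr C_{\mathscr D}$ of common complexes consists of the complexes lying in the complex sets of at least two distinct subnetworks; $d=|\mathscr C_{\mathscr D}|$. A $\mathscr C_{\mathscr D}$-linkage class (of $\mathscr N$ or of some $\mathscr N_i$) is a linkage class containing an element of $\mathscr C_{\mathscr D}$; removing linkage classes means removing their reactions (and complexes). The decomposition is pairwise binary-sized if there are integers $0\le b\le c\le d$ with $|\mathscr C_i\cap\mathscr C_j|\in\{b,c\}$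 for all $i\ne j$. A $\mathscr C$-decomposition is a decomposition in which the complex sets of distinct subnetworks are pairwise disjoint. *)

theory Defs
  imports Main
begin

(* A CRN is represented by its finite set of reactions R :: ('c * 'c) set,
   a reaction (y, y') going from reactant complex y to product complex y'.
   Complexes are elements of an abstract type 'c (species play no role here). *)

definition crn :: "('c \<times> 'c) set \<Rightarrow> bool" where
  "crn R \<longleftrightarrow> finite R \<and> (\<forall>(y, y') \<in> R. y \<noteq> y')"

definition complexes :: "('c \<times> 'c) set \<Rightarrow> 'c set" where
  "complexes R = fst ` R \<union> snd ` R"

definition ulink :: "('c \<times> 'c) set \<Rightarrow> ('c \<times> 'c) set" where
  "ulink R = (R \<union> R\<inverse>)\<^sup>*"

definition linkage_classes :: "('c \<times> 'c) set \<Rightarrow> 'c set set" where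
  "linkage_classes R = {ulink R `` {y} | y. y \<in> complexes R}"

(* decomposition given by subnetworks Rs 1, ..., Rs k: a partition of the reaction set
   (empty blocks tolerated; they do not count towards the length) *)
definition is_decomposition :: "('c \<times> 'c) set \<Rightarrow> nat \<Rightarrow> (nat \<Rightarrow> ('c \<times> 'c) set) \<Rightarrow> bool" where
  "is_decomposition R k Rs \<longleftrightarrow>
     (\<Union>i\<in>{1..k}. Rs i) = R \<and>
     (\<forall>i\<in>{1..k}. \<forall>j\<in>{1..k}. i \<noteq> j \<longrightarrow> Rs i \<inter> Rs j = {})"

definition decomp_length :: "nat \<Rightarrow> (nat \<Rightarrow> ('c \<times> 'c) set) \<Rightarrow> nat" where
  "decomp_length k Rs = card {i\<in>{1..k}. Rs i \<noteq> {}}"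

definition nontrivial_decomp :: "nat \<Rightarrow> (nat \<Rightarrow> ('c \<times> 'c) set) \<Rightarrow> bool" where
  "nontrivial_decomp k Rs \<longleftrightarrow> decomp_length k Rs \<ge> 2"

definition common_complexes :: "nat \<Rightarrow> (nat \<Rightarrow> ('c \<times> 'c) set) \<Rightarrow> 'c set" where
  "common_complexes k Rs = {y. \<exists>i\<in>{1..k}. \<exists>j\<in>{1..k}. i \<noteq> j \<and>
      y \<in> complexes (Rs i) \<and> y \<in> complexes (Rs j)}"

definition pairwise_binary_sized :: "nat \<Rightarrow> (nat \<Rightarrow> ('c \<times> 'c) set) \<Rightarrow> bool" where
  "pairwise_binary_sized k Rs \<longleftrightarrow>
     (\<exists>b c. b \<le> c \<and> c \<le> card (common_complexes k Rs) \<and>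
        (\<forall>i\<in>{1..k}. \<forall>j\<in>{1..k}. i \<noteq> j \<longrightarrow>
           card (complexes (Rs i) \<inter> complexes (Rs j)) \<in> {b, c}))"

definition remove_linkage_classes_meeting :: "'c set \<Rightarrow> ('c \<times> 'c) set \<Rightarrow> ('c \<times> 'c) set" where
  "remove_linkage_classes_meeting CD R =
     {r \<in> R. \<forall>L\<in>linkage_classes R. fst r \<in> L \<longrightarrow> L \<inter> CD = {}}"

definition is_C_decomposition :: "('c \<times> 'c) set \<Rightarrow> nat \<Rightarrow> (nat \<Rightarrow> ('c \<times> 'c) set) \<Rightarrow> bool" where
  "is_C_decomposition R k Rs \<longleftrightarrow> is_decomposition R k Rs \<and>
     (\<forall>i\<in>{1..k}. \<forall>j\<in>{1..k}. i \<noteq> j \<longrightarrow> complexes (Rs i) \<inter> complexes (Rs j) = {})"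

end

theory Submission
  imports Defs
begin

lemma ulink_mono: "S \<subseteq> T \<Longrightarrow> ulink S \<subseteq> ulink T"
  unfolding ulink_def by (rule rtrancl_mono) blast

lemma ulink_complexes:
  assumes "(x, y) \<in> ulink S" "x \<in> complexes S"
  shows "y \<in> complexes S"
  using assms(1) unfolding ulink_def
proof (induction rule: rtrancl_induct)
  case base then show ?case using assms(2) .
next
  case (step y z)
  then show ?case unfolding complexes_def by force
qed

lemma lc_mem:
  assumes "x \<in> complexes S"
  shows "ulink S `` {x} \<in> linkage_classes S" "x \<in> ulink S `` {x}"
  using assms unfolding linkage_classes_def ulink_def by auto

lemma ulink_sym: "(x, y) \<in> ulink S \<Longrightarrow> (y, x) \<in> ulink S"
proof -
  assume "(x, y) \<in> ulink S"
  then have "(y, x) \<in> ((S \<union> S\<inverse>)\<^sup>*)\<inverse>" unfolding ulink_def by simp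
  also have "((S \<union> S\<inverse>)\<^sup>*)\<inverse> = ((S \<union> S\<inverse>)\<inverse>)\<^sup>*" by (rule rtrancl_converse[symmetric])
  also have "(S \<union> S\<inverse>)\<inverse> = S \<union> S\<inverse>" by auto
  finally show ?thesis unfolding ulink_def .
qed

lemma ulink_trans: "(x, y) \<in> ulink S \<Longrightarrow> (y, z) \<in> ulink S \<Longrightarrow> (x, z) \<in> ulink S"
  unfolding ulink_def by (rule rtrancl_trans)

lemma lc_eq: "(y, x) \<in> ulink S \<Longrightarrow> ulink S `` {y} = ulink S `` {x}"
proof
  assume a: "(y, x) \<in> ulink S"
  show "ulink S `` {y} \<subseteq> ulink S `` {x}"
  proof
    fix z assume "z \<in> ulink S `` {y}"
    then have "(y, z) \<in> ulink S" by simp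
    then have "(x, z) \<in> ulink S" using ulink_trans[OF ulink_sym[OF a]] by blast
    then show "z \<in> ulink S `` {x}" by simp
  qed
  show "ulink S `` {x} \<subseteq> ulink S `` {y}"
  proof
    fix z assume "z \<in> ulink S `` {x}"
    then have "(x, z) \<in> ulink S" by simp
    then have "(y, z) \<in> ulink S" using ulink_trans[OF a] by blast
    then show "z \<in> ulink S `` {y}" by simp
  qed
qed

lemma rem_iff:
  "r \<in> remove_linkage_classes_meeting CD S \<longleftrightarrow> r \<in> S \<and> ulink S `` {fst r} \<inter> CD = {}"
proof -
  have fc: "r \<in> S \<Longrightarrow> fst r \<in> complexes S" unfolding complexes_def by auto
  show ?thesis
  proof
    assume a: "r \<in> remove_linkage_classes_meeting CD S"
    then have "r \<in> S" unfolding remove_linkage_classes_meeting_def by blast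
    moreover have "ulink S `` {fst r} \<in> linkage_classes S" "fst r \<in> ulink S `` {fst r}"
      using lc_mem[OF fc[OF calculation]] by blast+
    ultimately show "r \<in> S \<and> ulink S `` {fst r} \<inter> CD = {}"
      using a unfolding remove_linkage_classes_meeting_def by blast
  next
    assume a: "r \<in> S \<and> ulink S `` {fst r} \<inter> CD = {}"
    have "L \<inter> CD = {}" if L1: "L \<in> linkage_classes S" and L2: "fst r \<in> L" for L
    proof -
      obtain y where Ly: "L = ulink S `` {y}" using L1 unfolding linkage_classes_def by blast
      then have "(y, fst r) \<in> ulink S" using L2 by simp
      then have "L = ulink S `` {fst r}" using Ly lc_eq by metis
      then show ?thesis using a by simp
    qed
    then show "r \<in> remove_linkage_classes_meeting CD S"
      using a unfolding remove_linkage_classes_meeting_def by blast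
  qed
qed

lemma key:
  assumes dec: "is_decomposition R k Rs" and i: "i \<in> {1..k}"
    and x: "x \<in> complexes (Rs i)"
    and em: "ulink (Rs i) `` {x} \<inter> common_complexes k Rs = {}"
    and p: "(x, z) \<in> ulink R"
  shows "(x, z) \<in> ulink (Rs i)"
  using p unfolding ulink_def
proof (induction rule: rtrancl_induct)
  case base then show ?case by simp
next
  case (step y z)
  have yc: "y \<in> complexes (Rs i)" using ulink_complexes[of x y "Rs i"] step(3) x
    unfolding ulink_def by simp
  from step(2) have "(y, z) \<in> R \<or> (z, y) \<in> R" by auto
  then obtain j e where j: "j \<in> {1..k}" "e \<in> Rs j" "e = (y, z) \<or> e = (z, y)"
    using dec unfolding is_decomposition_def by blast
  show ?case
  proof (cases "j = i")
    case True
    then have "(y, z) \<in> Rs i \<union> (Rs i)\<inverse>" using j by auto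
    then show ?thesis using step(3) by (rule rtrancl_into_rtrancl[rotated])
  next
    case False
    have "y \<in> complexes (Rs j)" using j unfolding complexes_def by force
    then have "y \<in> common_complexes k Rs" using yc False i j
      unfolding common_complexes_def by blast
    moreover have "y \<in> ulink (Rs i) `` {x}" using step(3) unfolding ulink_def by simp
    ultimately show ?thesis using em by blast
  qed
qed

theorem theorem5:
  fixes R :: "('c \<times> 'c) set" and k :: nat and Rs :: "nat \<Rightarrow> ('c \<times> 'c) set"
  assumes "crn R"
    and "is_decomposition R k Rs"
    and "pairwise_binary_sized k Rs"
    and "\<exists>L\<in>linkage_classes R. L \<inter> common_complexes k Rs = {}"
  defines "R' \<equiv> remove_linkage_classes_meeting (common_complexes k Rs) R"
    and "Rs' \<equiv> (\<lambda>i. remove_linkage_classes_meeting (common_complexes k Rs) (Rs i))"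
  assumes "nontrivial_decomp k Rs'"
  shows "is_C_decomposition R' k Rs'"
proof -
  let ?CD = "common_complexes k Rs"
  note dec = assms(2)
  have memRs': "r \<in> Rs' i \<longleftrightarrow> r \<in> Rs i \<and> ulink (Rs i) `` {fst r} \<inter> ?CD = {}" for r i
    unfolding Rs'_def by (rule rem_iff)
  have memR': "r \<in> R' \<longleftrightarrow> r \<in> R \<and> ulink R `` {fst r} \<inter> ?CD = {}" for r
    unfolding R'_def by (rule rem_iff)
  have U: "(\<Union>i\<in>{1..k}. Rs' i) = R'"
  proof
    show "(\<Union>i\<in>{1..k}. Rs' i) \<subseteq> R'"
    proof
      fix r assume "r \<in> (\<Union>i\<in>{1..k}. Rs' i)"
      then obtain i where i: "i \<in> {1..k}" "r \<in> Rs' i" by blast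
      then have r: "r \<in> Rs i" and em: "ulink (Rs i) `` {fst r} \<inter> ?CD = {}"
        using memRs' by auto
      have fc: "fst r \<in> complexes (Rs i)" using r unfolding complexes_def by auto
      have rR: "r \<in> R" using r i dec unfolding is_decomposition_def by blast
      have "ulink R `` {fst r} \<subseteq> ulink (Rs i) `` {fst r}"
        using key[OF dec i(1) fc em] by blast
      then show "r \<in> R'" using memR' rR em by blast
    qed
  next
    show "R' \<subseteq> (\<Union>i\<in>{1..k}. Rs' i)"
    proof
      fix r assume "r \<in> R'"
      then have rR: "r \<in> R" and em: "ulink R `` {fst r} \<inter> ?CD = {}" using memR' by auto
      then obtain i where i: "i \<in> {1..k}" "r \<in> Rs i" using dec unfolding is_decomposition_def by blast
      have "Rs i \<subseteq> R" using i dec unfolding is_decomposition_def by blast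
      then have "ulink (Rs i) `` {fst r} \<subseteq> ulink R `` {fst r}" using ulink_mono by blast
      then have "r \<in> Rs' i" using memRs' i em by blast
      then show "r \<in> (\<Union>i\<in>{1..k}. Rs' i)" using i by blast
    qed
  qed
  have sub: "Rs' i \<subseteq> Rs i" for i using memRs' by blast
  have D: "Rs' i \<inter> Rs' j = {}" if "i \<in> {1..k}" "j \<in> {1..k}" "i \<noteq> j" for i j
    using dec that sub unfolding is_decomposition_def by blast
  have C: "complexes (Rs' i) \<inter> complexes (Rs' j) = {}"
    if ij: "i \<in> {1..k}" "j \<in> {1..k}" "i \<noteq> j" for i j
  proof (rule ccontr)
    assume "complexes (Rs' i) \<inter> complexes (Rs' j) \<noteq> {}"
    then obtain y where yi: "y \<in> complexes (Rs' i)" and yj: "y \<in> complexes (Rs' j)" by blast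
    have cmono: "complexes (Rs' l) \<subseteq> complexes (Rs l)" for l
      using sub[of l] unfolding complexes_def by blast
    have "y \<in> ?CD" using yi yj cmono ij unfolding common_complexes_def by blast
    from yi obtain r where r: "r \<in> Rs' i" "y = fst r \<or> y = snd r"
      unfolding complexes_def by force
    then have em: "ulink (Rs i) `` {fst r} \<inter> ?CD = {}" and ri: "r \<in> Rs i" using memRs' by auto
    have "y \<in> ulink (Rs i) `` {fst r}"
      using r ri unfolding ulink_def by (cases r) auto
    then show False using em \<open>y \<in> ?CD\<close> by blast
  qed
  show ?thesis unfolding is_C_decomposition_def is_decomposition_def
    using U D C by blast
qed

end
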